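(* Let $G$ be a group and $X$ a conjugacy class of $G$ that generates $G$. Assume there is a rack isomorphism $\varphi:\operatorname{Aff}(p,\alpha)\to X$ for some prime $p$ and some $\alpha\in\mathbb{Z}/p\mathbb{Z}\setminus\{0,1\}$. For $i\in\mathbb{Z}/p\mathbb{Z}$ put $g_i=\varphi(i)$, and put $\gamma=g_0g_1^{-1}$. Then: (1) For all $x,y,z\in\mathbb{Z}/p\mathbb{Z}$ and all integers $k\ge0$: $g_xg_y^{-1}=g_{x+z}g_{y+z}^{-1}$, $g_0g_k^{-1}=\gamma^k$ (with $k$ read modulo $p$ in the index), and $g_x\gamma=\gamma^{\alpha}g_x$ (with $\alpha$ represented by any integer). (2) The derived subgroup $[G,G]$ is cyclic of order $p$ and generated by $\gamma$.
   Context: A rack is a set with a binary operation $\triangleright$ such that each left multiplication $y\mapsto x\triangleright y$ is bijective and $x\triangleright(y\triangleright z)=(x\triangleright y)\triangleright(x\triangleright z)$. A conjugacy class $X$ is a rack with $x\triangleright y=xyx^{-1}$. $\operatorname{Aff}(p,\alpha)$ is the rack $\mathbb{Z}/p\mathbb{Z}$ with $i\triangleright j=(1-\alpha)i+\alpha j$. *)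

theory Defs
  imports "HOL-Algebra.Algebra"
begin

text \<open>The affine rack Aff(p, alpha): carrier Z/pZ represented as {0..<p} :: int set,
  with i |> j = (1 - alpha) i + alpha j (mod p).\<close>
definition aff_op :: "int \<Rightarrow> int \<Rightarrow> int \<Rightarrow> int \<Rightarrow> int" where
  "aff_op p \<alpha> i j = ((1 - \<alpha>) * i + \<alpha> * j) mod p"

definition conj_class :: "('a, 'b) monoid_scheme \<Rightarrow> 'a \<Rightarrow> 'a set" where
  "conj_class G x = {monoid.mult G (monoid.mult G g x) (m_inv G g) | g. g \<in> carrier G}"

definition aff_rack_iso :: "('a, 'b) monoid_scheme \<Rightarrow> int \<Rightarrow> int \<Rightarrow> (int \<Rightarrow> 'a) \<Rightarrow> 'a set \<Rightarrow> bool" where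
  "aff_rack_iso G p a f C \<longleftrightarrow>
     bij_betw f {0..<p} C \<and>
     (\<forall>i\<in>{0..<p}. \<forall>j\<in>{0..<p}.
        f (aff_op p a i j) = monoid.mult G (monoid.mult G (f i) (f j)) (m_inv G (f i)))"

end

theory Submission
  imports Defs "HOL-Algebra.Multiplicative_Group"
begin


lemma (in group) lc1 [simp]: "x \<in> carrier G \<Longrightarrow> y \<in> carrier G \<Longrightarrow> x \<otimes> (inv x \<otimes> y) = y"
  by (simp add: m_assoc[symmetric])
lemma (in group) lc2 [simp]: "x \<in> carrier G \<Longrightarrow> y \<in> carrier G \<Longrightarrow> inv x \<otimes> (x \<otimes> y) = y"
  by (simp add: m_assoc[symmetric])

locale affs = group G for G (structure) +
  fixes Xc :: "'a set" and p \<alpha> :: int and \<phi> :: "int \<Rightarrow> 'a"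
  assumes conj: "\<exists>x\<in>carrier G. Xc = conj_class G x"
    and gen: "generate G Xc = carrier G"
    and prime: "Factorial_Ring.prime p"
    and alpha: "\<alpha> \<in> {0..<p} - {0, 1}"
    and iso: "aff_rack_iso G p \<alpha> \<phi> Xc"
begin

definition gg :: "int \<Rightarrow> 'a" where "gg i = \<phi> (i mod p)"

lemma p_gt1: "p > 1" using prime by (simp add: prime_int_iff)

lemma alpha_bounds: "2 \<le> \<alpha>" "\<alpha> < p" using alpha by auto

lemma Xc_carrier: "Xc \<subseteq> carrier G"
proof -
  obtain x where x: "x \<in> carrier G" "Xc = conj_class G x" using conj by blast
  show ?thesis unfolding x(2) conj_class_def using x(1) by auto
qed

lemma Xc_conj: "u \<in> Xc \<Longrightarrow> h \<in> carrier G \<Longrightarrow> h \<otimes> u \<otimes> inv h \<in> Xc"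
proof -
  assume u: "u \<in> Xc" and h: "h \<in> carrier G"
  obtain x where x: "x \<in> carrier G" "Xc = conj_class G x" using conj by blast
  then obtain k where k: "k \<in> carrier G" "u = k \<otimes> x \<otimes> inv k" using u unfolding conj_class_def by auto
  have "h \<otimes> u \<otimes> inv h = (h \<otimes> k) \<otimes> x \<otimes> inv (h \<otimes> k)"
    using h k x by (simp add: m_assoc inv_mult_group)
  thus ?thesis using h k x unfolding conj_class_def by auto
qed

lemma bij: "bij_betw \<phi> {0..<p} Xc" using iso unfolding aff_rack_iso_def by auto

lemma gg_mod: "a mod p = b mod p \<Longrightarrow> gg a = gg b" unfolding gg_def by simp

lemma gg_in: "gg i \<in> Xc"
proof -
  have "i mod p \<in> {0..<p}" using p_gt1 by auto
  thus ?thesis using bij unfolding gg_def bij_betw_def by auto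
qed

lemma gg_carrier [simp]: "gg i \<in> carrier G" using gg_in Xc_carrier by auto

lemma Xc_eq: "Xc = range gg"
proof
  show "range gg \<subseteq> Xc" using gg_in by auto
  show "Xc \<subseteq> range gg"
  proof
    fix u assume "u \<in> Xc"
    then obtain i where "i \<in> {0..<p}" "u = \<phi> i" using bij unfolding bij_betw_def by auto
    hence "u = gg i" unfolding gg_def by simp
    thus "u \<in> range gg" by auto
  qed
qed

lemma rack: "gg i \<otimes> gg j \<otimes> inv (gg i) = gg ((1-\<alpha>)*i + \<alpha>*j)"
proof -
  have i: "i mod p \<in> {0..<p}" and j: "j mod p \<in> {0..<p}" using p_gt1 by auto
  have "((1-\<alpha>)*(i mod p) + \<alpha>*(j mod p)) mod p = ((1-\<alpha>)*i + \<alpha>*j) mod p"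
    by (rule mod_add_cong[OF mod_mult_right_eq mod_mult_right_eq])
  moreover have "\<phi> (aff_op p \<alpha> (i mod p) (j mod p)) = \<phi> (i mod p) \<otimes> \<phi> (j mod p) \<otimes> inv (\<phi> (i mod p))"
    using iso i j unfolding aff_rack_iso_def by blast
  ultimately show ?thesis unfolding gg_def aff_op_def by simp
qed

lemma inv_exists: "\<not> p dvd a \<Longrightarrow> \<exists>b. (a*b) mod p = 1"
proof -
  assume "\<not> p dvd a"
  hence "coprime p a" using prime prime_imp_coprime by blast
  then obtain u v where "u * p + v * a = 1" using bezout_int[of p a] by auto
  hence "a*v = 1 + (-u)*p" by (simp add: algebra_simps)
  hence "(a*v) mod p = 1 mod p" by (simp only: mod_mult_self1)
  thus ?thesis using p_gt1 by auto
qed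

lemma not_dvd_alpha: "\<not> p dvd \<alpha>"
  using alpha_bounds zdvd_imp_le[of p \<alpha>] by auto

lemma not_dvd_c: "\<not> p dvd (1-\<alpha>)"
proof
  assume "p dvd (1-\<alpha>)" hence "p dvd (\<alpha>-1)" by (metis dvd_minus_iff minus_diff_eq)
  thus False using alpha_bounds zdvd_imp_le[of p "\<alpha>-1"] by auto
qed


definition \<beta> where "\<beta> = (SOME b. (\<alpha>*b) mod p = 1)"
lemma beta: "(\<alpha>*\<beta>) mod p = 1"
  unfolding \<beta>_def using someI_ex[OF inv_exists[OF not_dvd_alpha]] .
definition \<delta> where "\<delta> = (SOME b. ((1-\<alpha>)*b) mod p = 1)"
lemma delta: "((1-\<alpha>)*\<delta>) mod p = 1"
  unfolding \<delta>_def using someI_ex[OF inv_exists[OF not_dvd_c]] .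

lemma mod_one_mult: "(a*b) mod p = 1 \<Longrightarrow> (a*(b*j)) mod p = j mod p"
proof -
  assume h: "(a*b) mod p = 1"
  have "(a*(b*j)) mod p = (((a*b) mod p) * j) mod p" by (simp add: mod_mult_left_eq mult.assoc)
  thus ?thesis using h by simp
qed

lemma rack0inv: "inv (gg 0) \<otimes> gg j \<otimes> gg 0 = gg (\<beta>*j)"
proof -
  have "gg 0 \<otimes> gg (\<beta>*j) \<otimes> inv (gg 0) = gg j"
    using rack[of 0 "\<beta>*j"] gg_mod[OF mod_one_mult[OF beta, of j]] by simp
  hence "inv (gg 0) \<otimes> gg j \<otimes> gg 0 = inv (gg 0) \<otimes> (gg 0 \<otimes> gg (\<beta>*j) \<otimes> inv (gg 0)) \<otimes> gg 0" by simp
  also have "... = gg (\<beta>*j)" by (simp add: m_assoc)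
  finally show ?thesis .
qed

definition ee where "ee x = gg x \<otimes> inv (gg 0)"
definition T where "T h s \<longleftrightarrow> h \<in> carrier G \<and> (\<forall>i. h \<otimes> gg i \<otimes> inv h = gg (i+s))"

lemma ee_carrier [simp]: "ee x \<in> carrier G" unfolding ee_def by simp

lemma T_ee: "T (ee x) ((1-\<alpha>)*x)"
  unfolding T_def
proof (intro conjI allI)
  show "ee x \<in> carrier G" by simp
  fix i
  have "ee x \<otimes> gg i \<otimes> inv (ee x) = gg x \<otimes> (inv (gg 0) \<otimes> gg i \<otimes> gg 0) \<otimes> inv (gg x)"
    unfolding ee_def by (simp add: m_assoc inv_mult_group)
  also have "... = gg x \<otimes> gg (\<beta>*i) \<otimes> inv (gg x)" by (simp add: rack0inv)
  also have "... = gg ((1-\<alpha>)*x + \<alpha>*(\<beta>*i))" by (rule rack)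
  also have "... = gg (i + (1-\<alpha>)*x)"
  proof (rule gg_mod)
    have "((1-\<alpha>)*x + \<alpha>*(\<beta>*i)) mod p = ((1-\<alpha>)*x + i) mod p"
      by (rule mod_add_cong[OF refl mod_one_mult[OF beta]])
    thus "((1-\<alpha>)*x + \<alpha>*(\<beta>*i)) mod p = (i + (1-\<alpha>)*x) mod p" by (simp add: add.commute)
  qed
  finally show "ee x \<otimes> gg i \<otimes> inv (ee x) = gg (i + (1-\<alpha>)*x)" .
qed

lemma T_mult: "T h s \<Longrightarrow> T k r \<Longrightarrow> T (h \<otimes> k) (s + r)"
  unfolding T_def
proof (intro conjI allI)
  assume h: "h \<in> carrier G \<and> (\<forall>i. h \<otimes> gg i \<otimes> inv h = gg (i+s))"
     and k: "k \<in> carrier G \<and> (\<forall>i. k \<otimes> gg i \<otimes> inv k = gg (i+r))"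
  show "h \<otimes> k \<in> carrier G" using h k by simp
  fix i
  have "(h \<otimes> k) \<otimes> gg i \<otimes> inv (h \<otimes> k) = h \<otimes> (k \<otimes> gg i \<otimes> inv k) \<otimes> inv h"
    using conjunct1[OF h] conjunct1[OF k] by (simp add: m_assoc inv_mult_group)
  also have "... = gg (i + r + s)"
  proof -
    have hk: "k \<otimes> gg i \<otimes> inv k = gg (i+r)" using k by blast
    have hh: "h \<otimes> gg (i+r) \<otimes> inv h = gg (i+r+s)" using h by blast
    show ?thesis by (simp only: hk hh)
  qed
  finally show "(h \<otimes> k) \<otimes> gg i \<otimes> inv (h \<otimes> k) = gg (i + (s + r))" by (simp add: ac_simps)
qed

lemma T_inv: "T h s \<Longrightarrow> T (inv h) (-s)"
  unfolding T_def
proof (intro conjI allI)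
  assume h: "h \<in> carrier G \<and> (\<forall>i. h \<otimes> gg i \<otimes> inv h = gg (i+s))"
  show "inv h \<in> carrier G" using h by simp
  fix i
  have e: "h \<otimes> gg (i - s) \<otimes> inv h = gg (i - s + s)" using h by blast
  have "gg i = h \<otimes> gg (i - s) \<otimes> inv h" using e by simp
  hence "inv h \<otimes> gg i \<otimes> inv (inv h) = inv h \<otimes> (h \<otimes> gg (i - s) \<otimes> inv h) \<otimes> h" using conjunct1[OF h] by simp
  also have "... = gg (i - s)" using conjunct1[OF h] by (simp add: m_assoc)
  finally show "inv h \<otimes> gg i \<otimes> inv (inv h) = gg (i + - s)" by simp
qed

lemma T_one: "T \<one> 0" unfolding T_def by simp

lemma T_pow: "T h s \<Longrightarrow> T (h [^] (n::nat)) (int n * s)"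
proof (induction n)
  case 0 thus ?case using T_one by simp
next
  case (Suc n)
  have T1: "T (h [^] n \<otimes> h) (int n * s + s)" using T_mult[OF Suc.IH[OF Suc.prems] Suc.prems] .
  have e1: "int (Suc n) * s = int n * s + s" by (simp add: algebra_simps)
  have e2: "h [^] (Suc n) = h [^] n \<otimes> h" by simp
  show ?case unfolding e1 e2 by (rule T1)
qed

lemma T_carrier: "T h s \<Longrightarrow> h \<in> carrier G" unfolding T_def by simp

lemma comm_inv_aux: "a \<in> carrier G \<Longrightarrow> b \<in> carrier G \<Longrightarrow> a \<otimes> b = b \<otimes> a \<Longrightarrow> a \<otimes> inv b = inv b \<otimes> a"
proof -
  assume a: "a \<in> carrier G" and b: "b \<in> carrier G" and c: "a \<otimes> b = b \<otimes> a"
  have "a \<otimes> inv b = inv b \<otimes> (b \<otimes> a) \<otimes> inv b" using a b by (simp add: m_assoc)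
  also have "... = inv b \<otimes> (a \<otimes> b) \<otimes> inv b" by (subst c) (rule refl)
  also have "... = inv b \<otimes> a" using a b by (simp add: m_assoc)
  finally show ?thesis .
qed

lemma central: assumes "T h s" "s mod p = 0" "y \<in> carrier G" shows "h \<otimes> y = y \<otimes> h"
proof -
  have hc: "h \<in> carrier G" using assms(1) T_carrier by blast
  have gi: "h \<otimes> gg i = gg i \<otimes> h" for i
  proof -
    have m: "(i+s) mod p = i mod p" by (subst mod_add_right_eq[symmetric]) (simp add: assms(2))
    have "h \<otimes> gg i \<otimes> inv h = gg (i+s)" using assms(1) unfolding T_def by blast
    also have "... = gg i" using gg_mod[OF m] .
    finally have "h \<otimes> gg i \<otimes> inv h = gg i" .
    hence "h \<otimes> gg i \<otimes> inv h \<otimes> h = gg i \<otimes> h" by simp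
    thus ?thesis using hc by (simp add: m_assoc)
  qed
  have "y \<in> generate G Xc" using assms(3) gen by simp
  thus ?thesis
  proof (induction rule: generate.induct)
    case one thus ?case using hc by simp
  next
    case (incl u)
    then obtain i where "u = gg i" using Xc_eq by auto
    thus ?case using gi by simp
  next
    case (inv u)
    then obtain i where "u = gg i" using Xc_eq by auto
    thus ?case using comm_inv_aux[OF hc gg_carrier gi] by simp
  next
    case (eng y1 y2)
    have c: "y1 \<in> carrier G" "y2 \<in> carrier G"
      using eng.hyps generate_in_carrier[OF Xc_carrier] by auto
    have "h \<otimes> (y1 \<otimes> y2) = (h \<otimes> y1) \<otimes> y2" using hc c by (simp add: m_assoc)
    also have "... = (y1 \<otimes> h) \<otimes> y2" by (subst eng.IH(1)) (rule refl)
    also have "... = y1 \<otimes> (h \<otimes> y2)" using hc c by (simp add: m_assoc)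
    also have "... = y1 \<otimes> (y2 \<otimes> h)" by (subst eng.IH(2)) (rule refl)
    also have "... = (y1 \<otimes> y2) \<otimes> h" using hc c by (simp add: m_assoc)
    finally show ?case .
  qed
qed

definition t where "t = ee 1"

lemma T_t: "T t (1-\<alpha>)" unfolding t_def using T_ee[of 1] by simp
lemma t_carrier [simp]: "t \<in> carrier G" unfolding t_def by simp

lemma ee_decomp: "\<exists>z. z \<in> carrier G \<and> (\<forall>y\<in>carrier G. z \<otimes> y = y \<otimes> z) \<and> ee (int a) = t [^] a \<otimes> z"
proof -
  define z where "z = inv (t [^] a) \<otimes> ee (int a)"
  have "T z (- (int a * (1-\<alpha>)) + (1-\<alpha>) * int a)"
    unfolding z_def by (rule T_mult[OF T_inv[OF T_pow[OF T_t]] T_ee])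
  hence Tz: "T z 0" by (simp add: algebra_simps)
  have "z \<in> carrier G" unfolding z_def by simp
  moreover have "\<forall>y\<in>carrier G. z \<otimes> y = y \<otimes> z" using central[OF Tz] by auto
  moreover have "ee (int a) = t [^] a \<otimes> z" unfolding z_def by (simp add: m_assoc[symmetric])
  ultimately show ?thesis by blast
qed

lemma ee_comm_nat: "ee (int a) \<otimes> ee (int b) = ee (int b) \<otimes> ee (int a)"
proof -
  obtain za where za: "za \<in> carrier G" "\<forall>y\<in>carrier G. za \<otimes> y = y \<otimes> za" "ee (int a) = t [^] a \<otimes> za"
    using ee_decomp by blast
  obtain zb where zb: "zb \<in> carrier G" "\<forall>y\<in>carrier G. zb \<otimes> y = y \<otimes> zb" "ee (int b) = t [^] b \<otimes> zb"
    using ee_decomp by blast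
  have ta: "t [^] a \<in> carrier G" and tb: "t [^] b \<in> carrier G" by simp_all
  have ab: "t [^] a \<otimes> t [^] b = t [^] b \<otimes> t [^] a"
    by (simp add: nat_pow_mult add.commute)
  have c1: "za \<otimes> t [^] b = t [^] b \<otimes> za" using za(2) tb by blast
  have c2: "za \<otimes> zb = zb \<otimes> za" using za(2) zb(1) by blast
  have c3: "zb \<otimes> t [^] a = t [^] a \<otimes> zb" using zb(2) ta by blast
  note cs = za(1) zb(1) ta tb
  have "ee (int a) \<otimes> ee (int b) = t [^] a \<otimes> (za \<otimes> t [^] b) \<otimes> zb"
    unfolding za(3) zb(3) using cs by (simp add: m_assoc)
  also have "... = t [^] a \<otimes> (t [^] b \<otimes> za) \<otimes> zb" by (subst c1) (rule refl)
  also have "... = (t [^] a \<otimes> t [^] b) \<otimes> (za \<otimes> zb)" using cs by (simp add: m_assoc)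
  also have "... = (t [^] b \<otimes> t [^] a) \<otimes> (zb \<otimes> za)" by (subst ab, subst c2) (rule refl)
  also have "... = t [^] b \<otimes> (zb \<otimes> t [^] a) \<otimes> za" by (subst c3) (use cs in \<open>simp add: m_assoc\<close>)
  also have "... = ee (int b) \<otimes> ee (int a)"
    unfolding za(3) zb(3) using cs by (simp add: m_assoc)
  finally show ?thesis .
qed

lemma ee_mod: "ee x = ee (int (nat (x mod p)))"
proof -
  have "int (nat (x mod p)) = x mod p" using p_gt1 by simp
  thus ?thesis unfolding ee_def using gg_mod[of x "int (nat (x mod p))"] by simp
qed

lemma ee_comm: "ee x \<otimes> ee y = ee y \<otimes> ee x"
  unfolding ee_mod[of x] ee_mod[of y] by (rule ee_comm_nat)

lemma ee_conj: "ee x \<otimes> ee u \<otimes> inv (ee x) = ee (u + (1-\<alpha>)*x) \<otimes> inv (ee ((1-\<alpha>)*x))"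
proof -
  have T: "ee x \<otimes> gg i \<otimes> inv (ee x) = gg (i + (1-\<alpha>)*x)" for i
    using T_ee[of x] unfolding T_def by blast
  have "ee x \<otimes> ee u \<otimes> inv (ee x) = (ee x \<otimes> gg u \<otimes> inv (ee x)) \<otimes> inv (ee x \<otimes> gg 0 \<otimes> inv (ee x))"
    unfolding ee_def[of u] by (simp add: m_assoc inv_mult_group)
  also have "... = gg (u + (1-\<alpha>)*x) \<otimes> inv (gg ((1-\<alpha>)*x))" using T[of u] T[of 0] by simp
  also have "... = ee (u + (1-\<alpha>)*x) \<otimes> inv (ee ((1-\<alpha>)*x))"
    unfolding ee_def by (simp add: m_assoc inv_mult_group)
  finally show ?thesis .
qed

lemma ee_add_c: "ee (u + (1-\<alpha>)*x) = ee u \<otimes> ee ((1-\<alpha>)*x)"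
proof -
  have "ee u = ee x \<otimes> ee u \<otimes> inv (ee x)" using ee_comm[of x u] by (simp add: m_assoc)
  also have "... = ee (u + (1-\<alpha>)*x) \<otimes> inv (ee ((1-\<alpha>)*x))" by (rule ee_conj)
  finally have "ee u \<otimes> ee ((1-\<alpha>)*x) = ee (u + (1-\<alpha>)*x) \<otimes> inv (ee ((1-\<alpha>)*x)) \<otimes> ee ((1-\<alpha>)*x)" by simp
  thus ?thesis by (simp add: m_assoc)
qed

lemma ee_cong: "a mod p = b mod p \<Longrightarrow> ee a = ee b" unfolding ee_def using gg_mod[of a b] by simp

lemma ee_hom: "ee (u + w) = ee u \<otimes> ee w"
proof -
  have m: "((1-\<alpha>)*(\<delta>*w)) mod p = w mod p" by (rule mod_one_mult[OF delta])
  have "ee (u + w) = ee (u + (1-\<alpha>)*(\<delta>*w))"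
    by (rule ee_cong, rule mod_add_cong[OF refl m[symmetric]])
  also have "... = ee u \<otimes> ee ((1-\<alpha>)*(\<delta>*w))" by (rule ee_add_c)
  also have "... = ee u \<otimes> ee w" using ee_cong[OF m] by simp
  finally show ?thesis .
qed

lemma ee_zero [simp]: "ee 0 = \<one>" unfolding ee_def by simp

lemma ee_pow: "ee (int n) = t [^] n"
proof (induction n)
  case 0 thus ?case by simp
next
  case (Suc n)
  have "ee (int (Suc n)) = ee (int n + 1)" by (simp add: add.commute)
  also have "... = ee (int n) \<otimes> t" unfolding t_def by (rule ee_hom)
  finally show ?case using Suc by simp
qed

lemma t_p: "t [^] (nat p) = \<one>"
proof -
  have "t [^] (nat p) = ee (int (nat p))" by (rule ee_pow[symmetric])
  also have "... = ee 0" using p_gt1 by (intro ee_cong) simp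
  finally show ?thesis by simp
qed

lemma ee_neg: "ee (-a) = inv (ee a)"
proof -
  have "ee (-a) \<otimes> ee a = \<one>" using ee_hom[of "-a" a] by simp
  hence "inv (ee a) = ee (-a)" by (intro inv_equality) simp_all
  thus ?thesis by simp
qed

lemma diff: "gg x \<otimes> inv (gg y) = ee (x - y)"
proof -
  have "ee x = ee (x - y) \<otimes> ee y" using ee_hom[of "x-y" y] by simp
  hence "gg x \<otimes> inv (gg 0) = ee (x - y) \<otimes> gg y \<otimes> inv (gg 0)" unfolding ee_def[of x] ee_def[of y]
    by (simp add: m_assoc)
  hence "gg x = ee (x - y) \<otimes> gg y" by simp
  hence "gg x \<otimes> inv (gg y) = ee (x - y) \<otimes> gg y \<otimes> inv (gg y)" by simp
  thus ?thesis by (simp add: m_assoc)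
qed


definition gam where "gam = \<phi> 0 \<otimes> inv (\<phi> 1)"

lemma phi0: "\<phi> 0 = gg 0" unfolding gg_def by simp
lemma phi1: "\<phi> 1 = gg 1" unfolding gg_def using p_gt1 by simp

lemma gam_t: "gam = inv t"
  unfolding gam_def phi0 phi1 t_def ee_def by (simp add: inv_mult_group)

lemma gam_carrier [simp]: "gam \<in> carrier G" unfolding gam_t by simp

lemma gam_pow: "gam [^] (k::nat) = inv (ee (int k))"
  unfolding gam_t ee_pow by (simp add: nat_pow_inv)

lemma claim2: "\<phi> 0 \<otimes> inv (\<phi> (int k mod p)) = gam [^] k"
proof -
  have "\<phi> (int k mod p) = gg k" unfolding gg_def by simp
  thus ?thesis unfolding gam_pow ee_def phi0 by (simp add: inv_mult_group)
qed

lemma gam_p: "gam [^] nat p = \<one>"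
proof -
  have "gam [^] nat p = inv (t [^] nat p)" unfolding gam_pow ee_pow by simp
  thus ?thesis using t_p by simp
qed

lemma gam_ne: "gam \<noteq> \<one>"
proof
  assume h: "gam = \<one>"
  have "\<phi> 0 = \<phi> 0 \<otimes> inv (\<phi> 1) \<otimes> \<phi> 1" unfolding phi0 phi1 by (simp add: m_assoc)
  also have "... = \<phi> 1" using h unfolding gam_def phi0 phi1 by simp
  finally have "\<phi> 0 = \<phi> 1" .
  moreover have "inj_on \<phi> {0..<p}" using bij bij_betw_imp_inj_on by blast
  moreover have "0 \<in> {0..<p}" "1 \<in> {0..<p}" using p_gt1 by auto
  ultimately show False by (metis inj_on_contraD zero_neq_one)
qed

lemma ord_gam: "ord gam = nat p"
proof -
  have d: "ord gam dvd nat p" using gam_p pow_eq_id[OF gam_carrier] by simp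
  have pr: "Factorial_Ring.prime (nat p)" using prime prime_int_nat_transfer by blast
  have "ord gam \<noteq> 1" using ord_eq_1[OF gam_carrier] gam_ne by simp
  thus ?thesis using d pr unfolding prime_nat_iff by blast
qed

lemma claim1: "x \<in> {0..<p} \<Longrightarrow> y \<in> {0..<p} \<Longrightarrow>
   \<phi> x \<otimes> inv (\<phi> y) = \<phi> ((x + z) mod p) \<otimes> inv (\<phi> ((y + z) mod p))"
proof -
  assume x: "x \<in> {0..<p}" and y: "y \<in> {0..<p}"
  have "\<phi> x = gg x" "\<phi> y = gg y" using x y unfolding gg_def by simp_all
  moreover have "\<phi> ((x + z) mod p) = gg (x+z)" "\<phi> ((y + z) mod p) = gg (y+z)" unfolding gg_def by simp_all
  ultimately show ?thesis using diff[of x y] diff[of "x+z" "y+z"] by simp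
qed

lemma claim3: assumes x: "x \<in> {0..<p}" and a: "a mod p = \<alpha> mod p"
  shows "\<phi> x \<otimes> gam = gam [^] a \<otimes> \<phi> x"
proof -
  have px: "\<phi> x = gg x" using x unfolding gg_def by simp
  have "gg x \<otimes> gam \<otimes> inv (gg x) = (gg x \<otimes> gg 0 \<otimes> inv (gg x)) \<otimes> inv (gg x \<otimes> gg 1 \<otimes> inv (gg x))"
    unfolding gam_def phi0 phi1 by (simp add: m_assoc inv_mult_group)
  also have "... = gg ((1-\<alpha>)*x + \<alpha>*0) \<otimes> inv (gg ((1-\<alpha>)*x + \<alpha>*1))" by (simp only: rack)
  also have "... = ee (((1-\<alpha>)*x + \<alpha>*0) - ((1-\<alpha>)*x + \<alpha>*1))" by (rule diff)
  also have "... = ee (-\<alpha>)" by simp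
  also have "... = inv (ee (int (nat \<alpha>)))" using alpha_bounds ee_neg[of \<alpha>] by simp
  also have "... = gam [^] nat \<alpha>" unfolding gam_pow ..
  finally have c: "gg x \<otimes> gam \<otimes> inv (gg x) = gam [^] nat \<alpha>" .
  have "p dvd (int (nat \<alpha>) - a)" using a alpha_bounds mod_eq_dvd_iff[of \<alpha> p a] by simp
  hence "gam [^] a = gam [^] (int (nat \<alpha>))"
    using int_pow_eq[OF gam_carrier, of a "int (nat \<alpha>)"] ord_gam p_gt1 by simp
  hence e: "gam [^] a = gam [^] nat \<alpha>" by (simp add: int_pow_int)
  have "\<phi> x \<otimes> gam = (gg x \<otimes> gam \<otimes> inv (gg x)) \<otimes> gg x" unfolding px by (simp add: m_assoc)
  thus ?thesis unfolding c e px .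
qed

abbreviation NN where "NN \<equiv> generate G {gam}"

lemma N_sub: "subgroup NN G" by (rule generate_is_subgroup) simp

lemma t_in_N: "t \<in> NN"
proof -
  have "inv gam \<in> NN" by (rule generate.inv) simp
  thus ?thesis unfolding gam_t by simp
qed

lemma ee_in_N: "ee z \<in> NN"
proof -
  have "ee z = t [^] (int (nat (z mod p)))" unfolding ee_mod[of z] ee_pow int_pow_int ..
  thus ?thesis using subgroup_int_pow_closed[OF N_sub t_in_N] by simp
qed

lemma conj_mult: "y \<in> carrier G \<Longrightarrow> u \<in> carrier G \<Longrightarrow> v \<in> carrier G \<Longrightarrow>
  y \<otimes> (u \<otimes> v) \<otimes> inv y = (y \<otimes> u \<otimes> inv y) \<otimes> (y \<otimes> v \<otimes> inv y)"
  by (simp add: m_assoc)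

lemma Nconj: assumes "n \<in> NN" "y \<in> carrier G" shows "y \<otimes> n \<otimes> inv y \<in> NN"
  using assms(1)
proof (induction rule: generate.induct)
  case one thus ?case using assms(2) generate.one by simp
next
  case (incl h)
  hence h: "h = gam" by simp
  obtain a where a: "y \<otimes> gg 0 \<otimes> inv y = gg a" using Xc_conj[OF gg_in assms(2)] Xc_eq by auto
  obtain b where b: "y \<otimes> gg 1 \<otimes> inv y = gg b" using Xc_conj[OF gg_in assms(2)] Xc_eq by auto
  have "y \<otimes> gam \<otimes> inv y = (y \<otimes> gg 0 \<otimes> inv y) \<otimes> inv (y \<otimes> gg 1 \<otimes> inv y)"
    unfolding gam_def phi0 phi1 using assms(2) by (simp add: m_assoc inv_mult_group)
  also have "... = ee (a - b)" unfolding a b by (rule diff)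
  finally show ?case using h ee_in_N by simp
next
  case (inv h)
  hence h: "h = gam" by simp
  have "y \<otimes> inv gam \<otimes> inv y = inv (y \<otimes> gam \<otimes> inv y)" using assms(2) by (simp add: m_assoc inv_mult_group)
  moreover have "y \<otimes> gam \<otimes> inv y \<in> NN"
  proof -
    obtain a where a: "y \<otimes> gg 0 \<otimes> inv y = gg a" using Xc_conj[OF gg_in assms(2)] Xc_eq by auto
    obtain b where b: "y \<otimes> gg 1 \<otimes> inv y = gg b" using Xc_conj[OF gg_in assms(2)] Xc_eq by auto
    have "y \<otimes> gam \<otimes> inv y = (y \<otimes> gg 0 \<otimes> inv y) \<otimes> inv (y \<otimes> gg 1 \<otimes> inv y)"
      unfolding gam_def phi0 phi1 using assms(2) by (simp add: m_assoc inv_mult_group)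
    also have "... = ee (a - b)" unfolding a b by (rule diff)
    finally show ?thesis using ee_in_N by simp
  qed
  ultimately show ?case using h subgroup.m_inv_closed[OF N_sub] by simp
next
  case (eng h1 h2)
  have c: "h1 \<in> carrier G" "h2 \<in> carrier G"
    using eng.hyps generate_in_carrier[of "{gam}"] by auto
  show ?case unfolding conj_mult[OF assms(2) c]
    using eng.IH subgroup.m_closed[OF N_sub] by blast
qed

lemma commX: assumes "u \<in> Xc" "h \<in> carrier G" shows "h \<otimes> u \<otimes> inv h \<otimes> inv u \<in> NN"
proof -
  obtain a where a: "h \<otimes> u \<otimes> inv h = gg a" using Xc_conj[OF assms] Xc_eq by auto
  obtain b where b: "u = gg b" using assms(1) Xc_eq by auto
  show ?thesis unfolding a unfolding b diff by (rule ee_in_N)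
qed

lemma derived_set_N: "y \<in> carrier G \<Longrightarrow> \<forall>h\<in>carrier G. h \<otimes> y \<otimes> inv h \<otimes> inv y \<in> NN"
proof -
  assume "y \<in> carrier G"
  hence "y \<in> generate G Xc" using gen by simp
  thus ?thesis
  proof (induction rule: generate.induct)
    case one thus ?case using generate.one[of G "{gam}"] by simp
  next
    case (incl u) thus ?case using commX by blast
  next
    case (inv u)
    have uc: "u \<in> carrier G" using inv Xc_carrier by auto
    show ?case
    proof
      fix h assume hc: "h \<in> carrier G"
      have "h \<otimes> inv u \<otimes> inv h \<otimes> inv (inv u) = inv u \<otimes> inv (h \<otimes> u \<otimes> inv h \<otimes> inv u) \<otimes> inv (inv u)"
        using uc hc by (simp add: m_assoc inv_mult_group)
      moreover have "inv (h \<otimes> u \<otimes> inv h \<otimes> inv u) \<in> NN"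
        using commX[OF inv hc] subgroup.m_inv_closed[OF N_sub] by blast
      ultimately show "h \<otimes> inv u \<otimes> inv h \<otimes> inv (inv u) \<in> NN"
        using Nconj[of _ "inv u"] uc by simp
    qed
  next
    case (eng y1 y2)
    have c: "y1 \<in> carrier G" "y2 \<in> carrier G"
      using eng.hyps generate_in_carrier[OF Xc_carrier] by auto
    show ?case
    proof
      fix h assume hc: "h \<in> carrier G"
      have "h \<otimes> (y1 \<otimes> y2) \<otimes> inv h \<otimes> inv (y1 \<otimes> y2) =
            (h \<otimes> y1 \<otimes> inv h \<otimes> inv y1) \<otimes> (y1 \<otimes> (h \<otimes> y2 \<otimes> inv h \<otimes> inv y2) \<otimes> inv y1)"
        using c hc by (simp add: m_assoc inv_mult_group)
      moreover have "h \<otimes> y1 \<otimes> inv h \<otimes> inv y1 \<in> NN" using eng.IH(1) hc by blast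
      moreover have "y1 \<otimes> (h \<otimes> y2 \<otimes> inv h \<otimes> inv y2) \<otimes> inv y1 \<in> NN"
        using Nconj eng.IH(2) hc c by blast
      ultimately show "h \<otimes> (y1 \<otimes> y2) \<otimes> inv h \<otimes> inv (y1 \<otimes> y2) \<in> NN"
        using subgroup.m_closed[OF N_sub] by simp
    qed
  qed
qed

lemma derived_sub: "derived G (carrier G) \<subseteq> NN"
  unfolding derived_def
proof (rule generate_subgroup_incl[OF _ N_sub])
  show "derived_set G (carrier G) \<subseteq> NN"
  proof
    fix z assume "z \<in> derived_set G (carrier G)"
    then obtain h1 h2 where h: "h1 \<in> carrier G" "h2 \<in> carrier G" "z = h1 \<otimes> h2 \<otimes> inv h1 \<otimes> inv h2" by blast
    thus "z \<in> NN" using derived_set_N[OF h(2)] h(1) by simp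
  qed
qed

lemma gam_derived: "gam \<in> derived G (carrier G)"
proof -
  obtain x where x: "x \<in> carrier G" "Xc = conj_class G x" using conj by blast
  have "gg 0 \<in> conj_class G x" using gg_in[of 0] x(2) by simp
  then obtain a where a: "a \<in> carrier G" "gg 0 = a \<otimes> x \<otimes> inv a" unfolding conj_class_def by blast
  have "gg 1 \<in> conj_class G x" using gg_in[of 1] x(2) by simp
  then obtain b where b: "b \<in> carrier G" "gg 1 = b \<otimes> x \<otimes> inv b" unfolding conj_class_def by blast
  define k where "k = b \<otimes> inv a"
  have kc: "k \<in> carrier G" unfolding k_def using a b by simp
  have e1: "gam = a \<otimes> x \<otimes> inv a \<otimes> inv (b \<otimes> x \<otimes> inv b)"
    unfolding gam_def phi0 phi1 a(2) b(2) ..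
  have e2: "gg 0 \<otimes> k \<otimes> inv (gg 0) \<otimes> inv k = a \<otimes> x \<otimes> inv a \<otimes> (b \<otimes> inv a) \<otimes> inv (a \<otimes> x \<otimes> inv a) \<otimes> inv (b \<otimes> inv a)"
    unfolding a(2) k_def ..
  have "gam = gg 0 \<otimes> k \<otimes> inv (gg 0) \<otimes> inv k"
    unfolding e1 e2 using a(1) b(1) x(1) by (simp add: m_assoc inv_mult_group)
  moreover have "gg 0 \<otimes> k \<otimes> inv (gg 0) \<otimes> inv k \<in> derived_set G (carrier G)"
    using kc gg_carrier[of 0] by blast
  ultimately have "gam \<in> derived_set G (carrier G)" by simp
  thus ?thesis unfolding derived_def by (rule generate.incl)
qed

lemma derived_eq: "derived G (carrier G) = NN"
proof
  show "derived G (carrier G) \<subseteq> NN" by (rule derived_sub)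
  show "NN \<subseteq> derived G (carrier G)"
    by (rule generate_subgroup_incl) (use gam_derived derived_is_subgroup in auto)
qed

lemma card_derived: "card (derived G (carrier G)) = nat p"
  unfolding derived_eq using generate_pow_card[OF gam_carrier] ord_gam by simp

end


theorem mainTheorem4:
  fixes G (structure) and Xc :: "'a set" and p \<alpha> :: int and \<phi> :: "int \<Rightarrow> 'a"
  assumes grp: "group G"
    and conj: "\<exists>x\<in>carrier G. Xc = conj_class G x"
    and gen: "generate G Xc = carrier G"
    and prime: "Factorial_Ring.prime p"
    and alpha: "\<alpha> \<in> {0..<p} - {0, 1}"
    and iso: "aff_rack_iso G p \<alpha> \<phi> Xc"
  defines "\<gamma> \<equiv> \<phi> 0 \<otimes> inv (\<phi> 1)"
  shows "(\<forall>x\<in>{0..<p}. \<forall>y\<in>{0..<p}. \<forall>z\<in>{0..<p}.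
            \<phi> x \<otimes> inv (\<phi> y) = \<phi> ((x + z) mod p) \<otimes> inv (\<phi> ((y + z) mod p)))
       \<and> (\<forall>k::nat. \<phi> 0 \<otimes> inv (\<phi> (int k mod p)) = \<gamma> [^] k)
       \<and> (\<forall>x\<in>{0..<p}. \<forall>a::int. a mod p = \<alpha> mod p \<longrightarrow> \<phi> x \<otimes> \<gamma> = \<gamma> [^] a \<otimes> \<phi> x)
       \<and> derived G (carrier G) = generate G {\<gamma>}
       \<and> card (derived G (carrier G)) = nat p"
proof -
  have A: "affs G Xc p \<alpha> \<phi>"
    unfolding affs_def affs_axioms_def using grp conj gen prime alpha iso by blast
  interpret affs G Xc p \<alpha> \<phi> by (rule A)
  have g: "\<gamma> = gam" unfolding \<gamma>_def gam_def ..
  show ?thesis unfolding g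
    using claim1 claim2 claim3 derived_eq card_derived by blast
qed

end
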